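(* Let $\mathbb K$ be a field with $2\in\mathbb K^\times$, $A$ a unital commutative associative $\mathbb K$-algebra, and $\mathfrak k$ a $\mathbb K$-Lie algebra with $H^1(\mathfrak k,\mathfrak k^* )=\{0\}$. Then $\mathfrak g=A\otimes\mathfrak k$ has no coupled cocycles.
   Context: $\mathfrak k^*$ is the coadjoint module, $(x.\lambda)(y)=-\lambda([x,y])$, and $H^1(\mathfrak k,\mathfrak k^* )$ is Chevalley–Eilenberg cohomology. $\mathfrak g$ has bracket $[a\otimes x,a'\otimes x']=aa'\otimes[x,x']$, $ax=a\otimes x$, unit $\mathbf 1$. $v\wedge w=\tfrac12(v\otimes w-w\otimes v)$, $v\vee w=\tfrac12(v\otimes w+w\otimes v)$; $I_A$ is the kernel of multiplication $S^2(A)\to A$. $p_1(ax\wedge by)=a\wedge b\otimes x\vee y$, $p_2(ax\wedge by)=ab\otimes x\wedge y$, $p_3(ax\wedge by)=(a\vee b-ab\vee\mathbf 1)\otimes x\wedge y$ give an isomorphism $\Lambda^2(\mathfrak g)\cong(\Lambda^2(A)\otimes S^2(\mathfrak k))\oplus(A\otimes\Lambda^2(\mathfrak k))\oplus(I_A\otimes\Lambda^2(\mathfrak k))$, so each linear $f:\Lambda^2(\mathfrak g)\to\mathfrak z$ is uniquely $f_1\circ p_1+f_2\circ p_2+f_3\circ p_3$. A 2-cocycle is such an $f$ vanishing on the span of $[u,v]\wedge w+[v,w]\wedge u+[w,u]\wedge v$. A coupled cocycle is a $\mathfrak z$-valued 2-cocycle, for some vector space $\mathfrak z$, with $f_3=0$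 such that $f_1\circ p_1$ is not a 2-cocycle. *)

theory Defs
  imports Main "HOL.Vector_Spaces"
begin

text \<open>All vector spaces are over the field 'k; they are modelled as types with a
  scalar multiplication satisfying the library locale vector_space.\<close>

definition bilinear_map ::
  "('k::field \<Rightarrow> 'u \<Rightarrow> 'u::ab_group_add) \<Rightarrow> ('k \<Rightarrow> 'v \<Rightarrow> 'v::ab_group_add) \<Rightarrow>
   ('k \<Rightarrow> 'w \<Rightarrow> 'w::ab_group_add) \<Rightarrow> ('u \<Rightarrow> 'v \<Rightarrow> 'w) \<Rightarrow> bool" where
  "bilinear_map s1 s2 s3 b \<longleftrightarrow>
     (\<forall>u. Vector_Spaces.linear s2 s3 (b u)) \<and> (\<forall>v. Vector_Spaces.linear s1 s3 (\<lambda>u. b u v))"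

definition comm_unital_algebra :: "('k::field \<Rightarrow> 'a \<Rightarrow> 'a::comm_ring_1) \<Rightarrow> bool" where
  "comm_unital_algebra sA \<longleftrightarrow>
     vector_space sA \<and> (\<forall>c a b. sA c (a * b) = sA c a * b)"

definition lie_algebra :: "('k::field \<Rightarrow> 'l \<Rightarrow> 'l::ab_group_add) \<Rightarrow> ('l \<Rightarrow> 'l \<Rightarrow> 'l) \<Rightarrow> bool" where
  "lie_algebra sL br \<longleftrightarrow>
     vector_space sL \<and> bilinear_map sL sL sL br \<and> (\<forall>x. br x x = 0) \<and>
     (\<forall>x y z. br x (br y z) + br y (br z x) + br z (br x y) = 0)"

definition coad :: "('l \<Rightarrow> 'l \<Rightarrow> 'l) \<Rightarrow> 'l \<Rightarrow> ('l \<Rightarrow> 'k::field) \<Rightarrow> ('l \<Rightarrow> 'k)" where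
  "coad br x lam = (\<lambda>y. - lam (br x y))"

definition dual_space :: "('k::field \<Rightarrow> 'l \<Rightarrow> 'l::ab_group_add) \<Rightarrow> ('l \<Rightarrow> 'k) set" where
  "dual_space sL = {lam. Vector_Spaces.linear sL ((*)) lam}"

text \<open>Chevalley--Eilenberg 1-cochains of k with values in k*: linear maps k \<rightarrow> k*.\<close>
definition CE_1cochain :: "('k::field \<Rightarrow> 'l \<Rightarrow> 'l::ab_group_add) \<Rightarrow> ('l \<Rightarrow> 'l \<Rightarrow> 'k) \<Rightarrow> bool" where
  "CE_1cochain sL c \<longleftrightarrow>
     (\<forall>x. c x \<in> dual_space sL) \<and> (\<forall>y. Vector_Spaces.linear sL ((*)) (\<lambda>x. c x y))"

definition CE_1cocycle :: "('k::field \<Rightarrow> 'l \<Rightarrow> 'l::ab_group_add) \<Rightarrow> ('l \<Rightarrow> 'l \<Rightarrow> 'l) \<Rightarrow> ('l \<Rightarrow> 'l \<Rightarrow> 'k) \<Rightarrow> bool" where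
  "CE_1cocycle sL br c \<longleftrightarrow> CE_1cochain sL c \<and>
     (\<forall>x y z. coad br x (c y) z - coad br y (c x) z - c (br x y) z = 0)"

definition CE_1coboundary :: "('k::field \<Rightarrow> 'l \<Rightarrow> 'l::ab_group_add) \<Rightarrow> ('l \<Rightarrow> 'l \<Rightarrow> 'l) \<Rightarrow> ('l \<Rightarrow> 'l \<Rightarrow> 'k) \<Rightarrow> bool" where
  "CE_1coboundary sL br c \<longleftrightarrow> (\<exists>lam \<in> dual_space sL. \<forall>x. c x = coad br x lam)"

definition H1_coadjoint_zero :: "('k::field \<Rightarrow> 'l \<Rightarrow> 'l::ab_group_add) \<Rightarrow> ('l \<Rightarrow> 'l \<Rightarrow> 'l) \<Rightarrow> bool" where
  "H1_coadjoint_zero sL br \<longleftrightarrow> (\<forall>c. CE_1cocycle sL br c \<longrightarrow> CE_1coboundary sL br c)"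

text \<open>g together with t : A \<times> k \<rightarrow> g is a tensor product A \<otimes> k (t a x = a \<otimes> x):
  t is bilinear and, for some bases BA of A and BL of k, the vectors a \<otimes> x
  (a \<in> BA, x \<in> BL) are pairwise distinct and form a basis of g.\<close>
definition is_tensor_product ::
  "('k::field \<Rightarrow> 'a \<Rightarrow> 'a::ab_group_add) \<Rightarrow> ('k \<Rightarrow> 'l \<Rightarrow> 'l::ab_group_add) \<Rightarrow>
   ('k \<Rightarrow> 'g \<Rightarrow> 'g::ab_group_add) \<Rightarrow> ('a \<Rightarrow> 'l \<Rightarrow> 'g) \<Rightarrow> bool" where
  "is_tensor_product sA sL sG t \<longleftrightarrow>
     vector_space sA \<and> vector_space sL \<and> vector_space sG \<and> bilinear_map sA sL sG t \<and>
     (\<exists>BA BL.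
        \<not> module.dependent sA BA \<and> module.span sA BA = UNIV \<and>
        \<not> module.dependent sL BL \<and> module.span sL BL = UNIV \<and>
        inj_on (case_prod t) (BA \<times> BL) \<and>
        \<not> module.dependent sG (case_prod t ` (BA \<times> BL)) \<and>
        module.span sG (case_prod t ` (BA \<times> BL)) = UNIV)"

definition current_bracket ::
  "('k::field \<Rightarrow> 'a \<Rightarrow> 'a::comm_ring_1) \<Rightarrow> ('k \<Rightarrow> 'l \<Rightarrow> 'l::ab_group_add) \<Rightarrow>
   ('k \<Rightarrow> 'g \<Rightarrow> 'g::ab_group_add) \<Rightarrow> ('l \<Rightarrow> 'l \<Rightarrow> 'l) \<Rightarrow> ('a \<Rightarrow> 'l \<Rightarrow> 'g) \<Rightarrow> ('g \<Rightarrow> 'g \<Rightarrow> 'g) \<Rightarrow> bool" where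
  "current_bracket sA sL sG br t brG \<longleftrightarrow>
     bilinear_map sG sG sG brG \<and> (\<forall>a b x y. brG (t a x) (t b y) = t (a * b) (br x y))"

text \<open>A linear map f : \<Lambda>^2(g) \<rightarrow> z is identified with the alternating bilinear
  map w(u,v) = f(u \<and> v).\<close>
definition alt_bilinear ::
  "('k::field \<Rightarrow> 'g \<Rightarrow> 'g::ab_group_add) \<Rightarrow> ('k \<Rightarrow> 'z \<Rightarrow> 'z::ab_group_add) \<Rightarrow> ('g \<Rightarrow> 'g \<Rightarrow> 'z) \<Rightarrow> bool" where
  "alt_bilinear sG sZ w \<longleftrightarrow> bilinear_map sG sG sZ w \<and> (\<forall>u. w u u = 0)"

definition two_cocycle :: "('g \<Rightarrow> 'g \<Rightarrow> 'g) \<Rightarrow> ('g \<Rightarrow> 'g \<Rightarrow> 'z::ab_group_add) \<Rightarrow> bool" where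
  "two_cocycle brG w \<longleftrightarrow>
     (\<forall>u v x. w (brG u v) x + w (brG v x) u + w (brG x u) v = 0)"

text \<open>Components of f in the decomposition (evaluated on generators):
  comp1 a b x y = f1(a\<and>b \<otimes> x\<or>y),  comp2 c x y = f2(c \<otimes> x\<and>y),
  comp3 a b x y = f3((a\<or>b - ab\<or>1) \<otimes> x\<and>y).  These are obtained by applying f to
  the preimages under p = (p1,p2,p3) of the respective generators.\<close>
definition comp1 :: "('k::field \<Rightarrow> 'z \<Rightarrow> 'z::ab_group_add) \<Rightarrow> ('a \<Rightarrow> 'l \<Rightarrow> 'g) \<Rightarrow> ('g \<Rightarrow> 'g \<Rightarrow> 'z) \<Rightarrow> 'a \<Rightarrow> 'a \<Rightarrow> 'l \<Rightarrow> 'l \<Rightarrow> 'z" where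
  "comp1 sZ t w a b x y = sZ (inverse 2) (w (t a x) (t b y) + w (t a y) (t b x))"

definition comp2 :: "('k::field \<Rightarrow> 'z \<Rightarrow> 'z::ab_group_add) \<Rightarrow> ('a::comm_ring_1 \<Rightarrow> 'l \<Rightarrow> 'g) \<Rightarrow> ('g \<Rightarrow> 'g \<Rightarrow> 'z) \<Rightarrow> 'a \<Rightarrow> 'l \<Rightarrow> 'l \<Rightarrow> 'z" where
  "comp2 sZ t w c x y = sZ (inverse 2) (w (t c x) (t 1 y) - w (t c y) (t 1 x))"

definition comp3 :: "('k::field \<Rightarrow> 'z \<Rightarrow> 'z::ab_group_add) \<Rightarrow> ('a::comm_ring_1 \<Rightarrow> 'l \<Rightarrow> 'g) \<Rightarrow> ('g \<Rightarrow> 'g \<Rightarrow> 'z) \<Rightarrow> 'a \<Rightarrow> 'a \<Rightarrow> 'l \<Rightarrow> 'l \<Rightarrow> 'z" where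
  "comp3 sZ t w a b x y =
     sZ (inverse 2) (w (t a x) (t b y) - w (t a y) (t b x)) - comp2 sZ t w (a * b) x y"

text \<open>Coupled cocycle: a z-valued 2-cocycle f with f3 = 0 such that f1 \<circ> p1 is not a
  2-cocycle.  Here f1 \<circ> p1 is the (alternating) bilinear map w1 on g determined by
  w1(a\<otimes>x, b\<otimes>y) = f1(a\<and>b \<otimes> x\<or>y); f3 = 0 means f3 vanishes on the spanning
  elements (a\<or>b - ab\<or>1) \<otimes> x\<and>y of I_A \<otimes> \<Lambda>^2(k).\<close>
definition coupled_cocycle ::
  "('k::field \<Rightarrow> 'g \<Rightarrow> 'g::ab_group_add) \<Rightarrow> ('k \<Rightarrow> 'z \<Rightarrow> 'z::ab_group_add) \<Rightarrow>
   ('a::comm_ring_1 \<Rightarrow> 'l \<Rightarrow> 'g) \<Rightarrow> ('g \<Rightarrow> 'g \<Rightarrow> 'g) \<Rightarrow> ('g \<Rightarrow> 'g \<Rightarrow> 'z) \<Rightarrow> bool" where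
  "coupled_cocycle sG sZ t brG w \<longleftrightarrow>
     alt_bilinear sG sZ w \<and> two_cocycle brG w \<and>
     (\<forall>a b x y. comp3 sZ t w a b x y = 0) \<and>
     (\<exists>w1. bilinear_map sG sG sZ w1 \<and>
        (\<forall>a b x y. w1 (t a x) (t b y) = comp1 sZ t w a b x y) \<and>
        \<not> two_cocycle brG w1)"

end

theory Submission
  imports Defs
begin

lemma vs_self: "vector_space ((*) :: 'k::field \<Rightarrow> 'k \<Rightarrow> 'k)"
  by unfold_locales (simp_all add: algebra_simps)

lemma sep_functional:
  assumes "vector_space s" "v \<noteq> 0"
  shows "\<exists>l. Vector_Spaces.linear s ((*)::'k::field\<Rightarrow>'k\<Rightarrow>'k) l \<and> l v \<noteq> 0"
proof -
  interpret vector_space_pair s "(*)::'k\<Rightarrow>'k\<Rightarrow>'k"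
    using assms(1) vs_self by (simp add: vector_space_pair_def)
  have ind: "\<not> vs1.dependent {v}" using assms(2) by simp
  show ?thesis using linear_construct[OF ind, of "\<lambda>_. 1"] construct_basis[OF ind, of v "\<lambda>_. 1"] by auto
qed

locale cc_setup =
  fixes sA :: "'k::field \<Rightarrow> 'a::comm_ring_1 \<Rightarrow> 'a"
    and sL :: "'k \<Rightarrow> 'l::ab_group_add \<Rightarrow> 'l"
    and br :: "'l \<Rightarrow> 'l \<Rightarrow> 'l"
    and sG :: "'k \<Rightarrow> 'g::ab_group_add \<Rightarrow> 'g"
    and t :: "'a \<Rightarrow> 'l \<Rightarrow> 'g"
    and brG :: "'g \<Rightarrow> 'g \<Rightarrow> 'g"
    and sZ :: "'k \<Rightarrow> 'z::ab_group_add \<Rightarrow> 'z"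
    and w w1 :: "'g \<Rightarrow> 'g \<Rightarrow> 'z"
  assumes two: "(2::'k) \<noteq> 0"
    and VL: "vector_space sL" and VG: "vector_space sG" and VZ: "vector_space sZ"
    and brl: "\<And>x. module_hom sL sL (br x)" and brr: "\<And>y. module_hom sL sL (\<lambda>x. br x y)"
    and bralt: "\<And>x. br x x = 0"
    and tl: "\<And>a. module_hom sL sG (t a)"
    and brGl: "\<And>u. module_hom sG sG (brG u)" and brGr: "\<And>v. module_hom sG sG (\<lambda>u. brG u v)"
    and brGt: "\<And>a b x y. brG (t a x) (t b y) = t (a*b) (br x y)"
    and wl: "\<And>u. module_hom sG sZ (w u)" and wr: "\<And>v. module_hom sG sZ (\<lambda>u. w u v)"
    and walt: "\<And>u. w u u = 0"
    and wcoc: "two_cocycle brG w"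
    and c3: "\<And>a b x y. comp3 sZ t w a b x y = 0"
    and w1l: "\<And>u. module_hom sG sZ (w1 u)" and w1r: "\<And>v. module_hom sG sZ (\<lambda>u. w1 u v)"
    and w1gen: "\<And>a b x y. w1 (t a x) (t b y) = comp1 sZ t w a b x y"
    and H1: "H1_coadjoint_zero sL br"
    and spanG: "module.span sG (range (case_prod t)) = UNIV"
begin

interpretation Z: vector_space sZ by (rule VZ)
interpretation L: vector_space sL by (rule VL)

lemmas hsimps = module_hom.add[OF wl] module_hom.add[OF wr] module_hom.neg[OF wl] module_hom.neg[OF wr]
  module_hom.diff[OF wl] module_hom.diff[OF wr] module_hom.scale[OF wl] module_hom.scale[OF wr]
  module_hom.add[OF tl] module_hom.neg[OF tl] module_hom.diff[OF tl] module_hom.scale[OF tl]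

lemma half: "sZ (inverse 2) v + sZ (inverse 2) v = v"
proof -
  have "inverse 2 + inverse 2 = (1::'k)" using two by (simp add: field_simps)
  then show ?thesis by (metis Z.scale_left_distrib Z.scale_one)
qed

lemma w_anti: "w u v = - w v u"
proof -
  have "w (u+v) (u+v) = w u u + w u v + (w v u + w v v)" by (simp add: hsimps)
  then have "w u v + w v u = 0" by (simp only: walt) simp
  then show ?thesis by (simp add: eq_neg_iff_add_eq_0)
qed

lemma br_anti: "br x y = - br y x"
proof -
  have "br (x+y) (x+y) = br x x + br x y + (br y x + br y y)"
    by (simp add: module_hom.add[OF brl] module_hom.add[OF brr])
  then have "br x y + br y x = 0" by (simp only: bralt) simp
  then show ?thesis by (simp add: eq_neg_iff_add_eq_0)
qed

lemma G1: "w (t a x) (t b y) = comp1 sZ t w a b x y + comp2 sZ t w (a*b) x y"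
proof -
  have "comp2 sZ t w (a*b) x y = sZ (inverse 2) (w (t a x) (t b y) - w (t a y) (t b x))"
    using c3[of a b x y] by (simp add: comp3_def)
  then have "comp1 sZ t w a b x y + comp2 sZ t w (a*b) x y
     = sZ (inverse 2) (w (t a x) (t b y)) + sZ (inverse 2) (w (t a x) (t b y))"
    by (simp add: comp1_def Z.scale_right_distrib Z.scale_right_diff_distrib)
  then show ?thesis using half by simp
qed

lemma comp1_anti: "comp1 sZ t w b a x y = - comp1 sZ t w a b x y"
  unfolding comp1_def
  by (subst (1 2) w_anti) (simp add: Z.scale_minus_right[symmetric] add.commute)

lemma comp1_sym: "comp1 sZ t w a b y x = comp1 sZ t w a b x y"
  unfolding comp1_def by (simp add: add.commute)

lemma comp2_anti: "comp2 sZ t w c y x = - comp2 sZ t w c x y"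
  unfolding comp2_def by (simp add: Z.scale_minus_right[symmetric])

lemma comp1_add: "comp1 sZ t w a b (x+x') y = comp1 sZ t w a b x y + comp1 sZ t w a b x' y"
  unfolding comp1_def by (simp add: hsimps Z.scale_right_distrib add_ac)
lemma comp1_scale: "comp1 sZ t w a b (sL c x) y = sZ c (comp1 sZ t w a b x y)"
  unfolding comp1_def by (simp add: hsimps Z.scale_right_distrib mult.commute)
lemma comp1_neg: "comp1 sZ t w a b (- x) y = - comp1 sZ t w a b x y"
proof -
  have "- x = sL (-1) x" using L.scale_minus_left[of 1 x] by simp
  then show ?thesis using comp1_scale[of a b "-1" x y] Z.scale_minus_left[of 1] by simp
qed
lemma comp2_add: "comp2 sZ t w a (x+x') y = comp2 sZ t w a x y + comp2 sZ t w a x' y"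
  unfolding comp2_def by (simp add: hsimps Z.scale_right_distrib Z.scale_right_diff_distrib algebra_simps)
lemma comp2_scale: "comp2 sZ t w a (sL c x) y = sZ c (comp2 sZ t w a x y)"
  unfolding comp2_def by (simp add: hsimps Z.scale_right_distrib Z.scale_right_diff_distrib mult.commute)
lemma comp2_neg: "comp2 sZ t w a (- x) y = - comp2 sZ t w a x y"
proof -
  have "- x = sL (-1) x" using L.scale_minus_left[of 1 x] by simp
  then show ?thesis using comp2_scale[of a "-1" x y] Z.scale_minus_left[of 1] by simp
qed

definition "D e x y z = comp2 sZ t w e (br x y) z + comp2 sZ t w e (br y z) x + comp2 sZ t w e (br z x) y"

lemma E_gen: "comp1 sZ t w (a*b) c (br x y) z + comp1 sZ t w (b*c) a (br y z) x
   + comp1 sZ t w (c*a) b (br z x) y = - D (a*b*c) x y z"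
proof -
  have "w (brG (t a x) (t b y)) (t c z) + w (brG (t b y) (t c z)) (t a x) + w (brG (t c z) (t a x)) (t b y) = 0"
    using wcoc unfolding two_cocycle_def by blast
  then have "(comp1 sZ t w (a*b) c (br x y) z + comp1 sZ t w (b*c) a (br y z) x
   + comp1 sZ t w (c*a) b (br z x) y) + D (a*b*c) x y z = 0"
    by (simp add: brGt G1 D_def ac_simps)
  then show ?thesis by (simp add: eq_neg_iff_add_eq_0)
qed

lemma K2: "- comp1 sZ t w e 1 (br x y) z + comp1 sZ t w e 1 (br y z) x
   + comp1 sZ t w e 1 (br z x) y = - D e x y z"
  using E_gen[of 1 1 e x y z] comp1_anti[of 1 e] by simp

lemma sigma_cocycle_id:
  "- (comp1 sZ t w e 1 y (br x z) - comp2 sZ t w e y (br x z))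
   + (comp1 sZ t w e 1 x (br y z) - comp2 sZ t w e x (br y z))
   - (comp1 sZ t w e 1 (br x y) z - comp2 sZ t w e (br x y) z) = 0"
proof -
  have 1: "comp1 sZ t w e 1 y (br x z) = - comp1 sZ t w e 1 (br z x) y"
    by (metis comp1_sym comp1_neg br_anti)
  have 2: "comp1 sZ t w e 1 x (br y z) = comp1 sZ t w e 1 (br y z) x"
    by (metis comp1_sym)
  have 3: "comp2 sZ t w e y (br x z) = comp2 sZ t w e (br z x) y"
    by (metis comp2_anti comp2_neg br_anti)
  have 4: "comp2 sZ t w e x (br y z) = - comp2 sZ t w e (br y z) x"
    by (metis comp2_anti)
  show ?thesis using K2[of e x y z] unfolding 1 2 3 4 D_def
    by (simp add: algebra_simps)
qed


lemma comp1_add2: "comp1 sZ t w a b y (x+x') = comp1 sZ t w a b y x + comp1 sZ t w a b y x'"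
  by (metis comp1_sym comp1_add)
lemma comp1_scale2: "comp1 sZ t w a b y (sL c x) = sZ c (comp1 sZ t w a b y x)"
  by (metis comp1_sym comp1_scale)
lemma comp2_add2: "comp2 sZ t w a y (x+x') = comp2 sZ t w a y x + comp2 sZ t w a y x'"
proof -
  have "comp2 sZ t w a y (x+x') = - comp2 sZ t w a (x+x') y" by (rule comp2_anti)
  also have "\<dots> = - comp2 sZ t w a x y - comp2 sZ t w a x' y" by (simp add: comp2_add)
  also have "\<dots> = comp2 sZ t w a y x + comp2 sZ t w a y x'"
    using comp2_anti[of a x y] comp2_anti[of a x' y] by simp
  finally show ?thesis .
qed
lemma comp2_scale2: "comp2 sZ t w a y (sL c x) = sZ c (comp2 sZ t w a y x)"
proof -
  have "comp2 sZ t w a y (sL c x) = - comp2 sZ t w a (sL c x) y" by (rule comp2_anti)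
  also have "\<dots> = sZ c (- comp2 sZ t w a x y)" by (simp add: comp2_scale Z.scale_minus_right)
  also have "\<dots> = sZ c (comp2 sZ t w a y x)"
    using comp2_anti[of a x y] by simp
  finally show ?thesis .
qed

lemma sigma_zero: "comp1 sZ t w e 1 x y = 0"
proof (rule ccontr)
  assume ne: "comp1 sZ t w e 1 x y \<noteq> 0"
  obtain l where l: "Vector_Spaces.linear sZ ((*)::'k\<Rightarrow>'k\<Rightarrow>'k) l" "l (comp1 sZ t w e 1 x y) \<noteq> 0"
    using sep_functional[OF VZ ne] by blast
  have lh: "module_hom sZ ((*)::'k\<Rightarrow>'k\<Rightarrow>'k) l" using l(1) by (simp add: module_hom_iff_linear)
  note lsimps = module_hom.add[OF lh] module_hom.diff[OF lh] module_hom.neg[OF lh] module_hom.scale[OF lh]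
  define c where "c = (\<lambda>u v. l (comp1 sZ t w e 1 u v - comp2 sZ t w e u v))"
  have lin2: "Vector_Spaces.linear sL ((*)::'k\<Rightarrow>'k\<Rightarrow>'k) (c u)" for u
    unfolding linear_iff using VL vs_self
    by (auto simp: c_def lsimps comp1_add2 comp2_add2 comp1_scale2 comp2_scale2
        Z.scale_right_diff_distrib[symmetric] algebra_simps)
  have lin1: "Vector_Spaces.linear sL ((*)::'k\<Rightarrow>'k\<Rightarrow>'k) (\<lambda>u. c u v)" for v
    unfolding linear_iff using VL vs_self
    by (auto simp: c_def lsimps comp1_add comp2_add comp1_scale comp2_scale
        Z.scale_right_diff_distrib[symmetric] algebra_simps)
  have cc: "CE_1cocycle sL br c"
    unfolding CE_1cocycle_def CE_1cochain_def dual_space_def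
  proof (intro conjI allI)
    fix a b d
    have "coad br a (c b) d - coad br b (c a) d - c (br a b) d =
      l (- (comp1 sZ t w e 1 b (br a d) - comp2 sZ t w e b (br a d))
   + (comp1 sZ t w e 1 a (br b d) - comp2 sZ t w e a (br b d))
   - (comp1 sZ t w e 1 (br a b) d - comp2 sZ t w e (br a b) d))"
      unfolding coad_def c_def lsimps by simp
    then show "coad br a (c b) d - coad br b (c a) d - c (br a b) d = 0"
      using sigma_cocycle_id[of e b a d] module_hom.zero[OF lh] by simp
  qed (use lin1 lin2 in auto)
  then obtain lam where lam: "lam \<in> dual_space sL" "\<And>u. c u = coad br u lam"
    using H1 unfolding H1_coadjoint_zero_def CE_1coboundary_def by blast
  have lamh: "module_hom sL ((*)::'k\<Rightarrow>'k\<Rightarrow>'k) lam"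
    using lam(1) by (simp add: dual_space_def module_hom_iff_linear)
  have "c x y + c y x = - lam (br x y + br y x)"
    using lam(2) by (simp add: coad_def module_hom.add[OF lamh])
  also have "\<dots> = 0" using br_anti[of x y] module_hom.zero[OF lamh] by simp
  finally have "c x y + c y x = 0" .
  moreover have "c x y + c y x = 2 * l (comp1 sZ t w e 1 x y)"
    unfolding c_def using comp1_sym[of e 1 x y] comp2_anti[of e x y]
    by (simp add: lsimps algebra_simps)
  ultimately show False using l(2) two by simp
qed

lemma D_zero: "D e x y z = 0"
  using K2[of e x y z] by (simp add: sigma_zero)

lemma w1_gen_cocycle:
  "w1 (brG (t a x) (t b y)) (t c z) + w1 (brG (t b y) (t c z)) (t a x) + w1 (brG (t c z) (t a x)) (t b y) = 0"
  using E_gen[of a b c x y z] by (simp add: brGt w1gen D_zero)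


lemma ext0: assumes "module_hom sG sZ f" "\<And>a x. f (t a x) = 0" shows "f u = 0"
proof -
  have u: "u \<in> module.span sG (range (case_prod t))" using spanG by simp
  show ?thesis by (rule module_hom.eq_0_on_span[OF assms(1) _ u]) (auto simp: assms(2))
qed

lemma w1_cocycle: "two_cocycle brG w1"
proof -
  define P where "P = (\<lambda>u v s. w1 (brG u v) s + w1 (brG v s) u + w1 (brG s u) v)"
  have MG: "module sG" and MZ: "module sZ" using VG VZ by (simp_all add: module_iff_vector_space)
  note gs = module_hom.add[OF w1l] module_hom.add[OF w1r] module_hom.scale[OF w1l] module_hom.scale[OF w1r]
    module_hom.add[OF brGl] module_hom.add[OF brGr] module_hom.scale[OF brGl] module_hom.scale[OF brGr]
    Z.scale_right_distrib
  have h1: "module_hom sG sZ (\<lambda>u. P u v s)" for v s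
    unfolding module_hom_iff P_def using MG MZ by (auto simp: gs algebra_simps)
  have h2: "module_hom sG sZ (\<lambda>v. P u v s)" for u s
    unfolding module_hom_iff P_def using MG MZ by (auto simp: gs algebra_simps)
  have h3: "module_hom sG sZ (\<lambda>s. P u v s)" for u v
    unfolding module_hom_iff P_def using MG MZ by (auto simp: gs algebra_simps)
  have s0: "P (t a x) (t b y) (t c z) = 0" for a x b y c z
    unfolding P_def by (rule w1_gen_cocycle)
  have s1: "P u (t b y) (t c z) = 0" for u b y c z
    by (rule ext0[OF h1]) (rule s0)
  have s2: "P u v (t c z) = 0" for u v c z
    by (rule ext0[OF h2]) (rule s1)
  have s3: "P u v s = 0" for u v s
    by (rule ext0[OF h3]) (rule s2)
  show ?thesis unfolding two_cocycle_def using s3 by (simp add: P_def)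
qed


end

theorem corollary3p8:
  fixes sA :: "'k::field \<Rightarrow> 'a::comm_ring_1 \<Rightarrow> 'a"
    and sL :: "'k \<Rightarrow> 'l::ab_group_add \<Rightarrow> 'l"
    and br :: "'l \<Rightarrow> 'l \<Rightarrow> 'l"
    and sG :: "'k \<Rightarrow> 'g::ab_group_add \<Rightarrow> 'g"
    and t :: "'a \<Rightarrow> 'l \<Rightarrow> 'g"
    and brG :: "'g \<Rightarrow> 'g \<Rightarrow> 'g"
    and sZ :: "'k \<Rightarrow> 'z::ab_group_add \<Rightarrow> 'z"
  assumes "(2::'k) \<noteq> 0"
    and "comm_unital_algebra sA"
    and "lie_algebra sL br"
    and "H1_coadjoint_zero sL br"
    and "is_tensor_product sA sL sG t"
    and "current_bracket sA sL sG br t brG"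
    and "vector_space sZ"
  shows "\<not> (\<exists>w. coupled_cocycle sG sZ t brG w)"
proof
  assume "\<exists>w. coupled_cocycle sG sZ t brG w"
  then obtain w w1 where
    wb: "bilinear_map sG sG sZ w" and walt: "\<And>u. w u u = 0" and wc: "two_cocycle brG w"
    and c3: "\<And>a b x y. comp3 sZ t w a b x y = 0"
    and w1b: "bilinear_map sG sG sZ w1"
    and w1g: "\<And>a b x y. w1 (t a x) (t b y) = comp1 sZ t w a b x y"
    and nc: "\<not> two_cocycle brG w1"
    unfolding coupled_cocycle_def alt_bilinear_def by blast
  from assms(3) have VL: "vector_space sL" and brb: "bilinear_map sL sL sL br"
    and bralt: "\<And>x. br x x = 0"
    unfolding lie_algebra_def by auto
  from assms(5) obtain BA BL where VG: "vector_space sG" and tb: "bilinear_map sA sL sG t"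
    and sp: "module.span sG (case_prod t ` (BA \<times> BL)) = UNIV"
    unfolding is_tensor_product_def by blast
  from assms(6) have brGb: "bilinear_map sG sG sG brG"
    and brGt: "\<And>a b x y. brG (t a x) (t b y) = t (a*b) (br x y)"
    unfolding current_bracket_def by auto
  have MG: "module sG" using VG by (simp add: module_iff_vector_space)
  have spanG: "module.span sG (range (case_prod t)) = UNIV"
    using module.span_mono[OF MG, of "case_prod t ` (BA \<times> BL)" "range (case_prod t)"] sp by auto
  have "cc_setup sL br sG t brG sZ w w1"
    unfolding cc_setup_def
    using assms(1) VL VG assms(7) brb bralt tb brGb brGt wb walt wc c3 w1b w1g assms(4) spanG
    unfolding bilinear_map_def module_hom_iff_linear by auto
  then show False using cc_setup.w1_cocycle nc by blast
qed

end
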